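(* Let $q$ be a power of a prime $p$, let $k$ be an algebraically closed field of characteristic $p$, let $G=\mathrm{GL}_n(k)$ and $\mathfrak{g}=\mathfrak{gl}_n(k)$. Let $F:G\to G$ be the Frobenius endomorphism $F((g_{i,j}))=\big((g^q_{n+1-j,\,n+1-i})\big)^{-1}$ (the inverse of the matrix whose $(i,j)$ entry is $g_{n+1-j,n+1-i}^q$), and let $F:\mathfrak{g}\to\mathfrak{g}$ be given by $F((x_{i,j}))=(x^q_{n+1-j,\,n+1-i})$. Let $\alpha\in\mathbb{F}_{q^2}\setminus\mathbb{F}_q$ (viewed inside $k$). Then the map $s:G_{\mathrm{uni}}\to\mathfrak{g}_{\mathrm{nil}}$, $s(g)=(g-1)(\alpha-\alpha^q g)^{-1}$, is a $G$-equivariant (for conjugation on $G_{\mathrm{uni}}$ and the adjoint action on $\mathfrak{g}_{\mathrm{nil}}$) bijective morphism of varieties, with inverse $s^{-1}(x)=(1+\alpha^q x)^{-1}(\alpha x+1)$, and it satisfies $s(F(g))=F(s(g))$ for all $g\in G_{\mathrm{uni}}$.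
   Context: $G_{\mathrm{uni}}$ denotes the variety of unipotent elements of $G$ and $\mathfrak{g}_{\mathrm{nil}}$ the variety of nilpotent elements of $\mathfrak{g}$. *)

theory Defs
  imports "HOL-Computational_Algebra.Polynomial" "Jordan_Normal_Form.Determinant"
begin

text \<open>Two-sided inverse of a square matrix (arbitrary if none exists).\<close>
definition mat_inv :: "'a::field mat \<Rightarrow> 'a mat" where
  "mat_inv A = (SOME B. B \<in> carrier_mat (dim_row A) (dim_row A) \<and>
                        A * B = 1\<^sub>m (dim_row A) \<and> B * A = 1\<^sub>m (dim_row A))"

definition GL :: "nat \<Rightarrow> 'a::field mat set" where
  "GL n = {g. g \<in> carrier_mat n n \<and> det g \<noteq> 0}"

definition nil_mats :: "nat \<Rightarrow> 'a::field mat set" where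
  "nil_mats n = {x. x \<in> carrier_mat n n \<and> (\<exists>m. x ^\<^sub>m m = 0\<^sub>m n n)}"

definition uni_mats :: "nat \<Rightarrow> 'a::field mat set" where
  "uni_mats n = {g. g \<in> carrier_mat n n \<and> g - 1\<^sub>m n \<in> nil_mats n}"

inductive_set poly_fun :: "nat \<Rightarrow> ('a::comm_ring_1 mat \<Rightarrow> 'a) set" for n where
  pf_const: "(\<lambda>A. c) \<in> poly_fun n"
| pf_coord: "i < n \<Longrightarrow> j < n \<Longrightarrow> (\<lambda>A. A $$ (i,j)) \<in> poly_fun n"
| pf_add: "f \<in> poly_fun n \<Longrightarrow> g \<in> poly_fun n \<Longrightarrow> (\<lambda>A. f A + g A) \<in> poly_fun n"
| pf_mult: "f \<in> poly_fun n \<Longrightarrow> g \<in> poly_fun n \<Longrightarrow> (\<lambda>A. f A * g A) \<in> poly_fun n"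

text \<open>Morphism of (closed, affine) subvarieties X of M_n into M_n: every entry of the
  image is the restriction to X of a polynomial in the entries.\<close>
definition is_morphism :: "nat \<Rightarrow> 'a::comm_ring_1 mat set \<Rightarrow> ('a mat \<Rightarrow> 'a mat) \<Rightarrow> bool" where
  "is_morphism n X f \<longleftrightarrow> (\<forall>A\<in>X. f A \<in> carrier_mat n n) \<and>
     (\<forall>i<n. \<forall>j<n. \<exists>P\<in>poly_fun n. \<forall>A\<in>X. f A $$ (i,j) = P A)"

text \<open>Frobenius maps (0-based indices: n+1-j becomes n-1-j).\<close>
definition frob_G :: "nat \<Rightarrow> nat \<Rightarrow> 'a::field mat \<Rightarrow> 'a mat" where
  "frob_G n q g = mat_inv (mat n n (\<lambda>(i,j). (g $$ (n - 1 - j, n - 1 - i)) ^ q))"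

definition frob_g :: "nat \<Rightarrow> nat \<Rightarrow> 'a::field mat \<Rightarrow> 'a mat" where
  "frob_g n q x = mat n n (\<lambda>(i,j). (x $$ (n - 1 - j, n - 1 - i)) ^ q)"

definition s_map :: "nat \<Rightarrow> nat \<Rightarrow> 'a::field \<Rightarrow> 'a mat \<Rightarrow> 'a mat" where
  "s_map n q \<alpha> g = (g - 1\<^sub>m n) * mat_inv (\<alpha> \<cdot>\<^sub>m 1\<^sub>m n - (\<alpha> ^ q) \<cdot>\<^sub>m g)"

definition s_inv_map :: "nat \<Rightarrow> nat \<Rightarrow> 'a::field \<Rightarrow> 'a mat \<Rightarrow> 'a mat" where
  "s_inv_map n q \<alpha> x = mat_inv (1\<^sub>m n + (\<alpha> ^ q) \<cdot>\<^sub>m x) * (\<alpha> \<cdot>\<^sub>m x + 1\<^sub>m n)"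

end

theory Submission
  imports Defs "HOL-Computational_Algebra.Primes"
begin

lemma mat_inv_eq:
  fixes A B :: "'a::field mat"
  assumes A: "A \<in> carrier_mat n n" and B: "B \<in> carrier_mat n n"
    and AB: "A * B = 1\<^sub>m n" and BA: "B * A = 1\<^sub>m n"
  shows "mat_inv A = B"
proof -
  have dA: "dim_row A = n" using A by auto
  have uniq: "C = B" if C: "C \<in> carrier_mat n n" "A * C = 1\<^sub>m n" "C * A = 1\<^sub>m n" for C
  proof -
    have "C = C * (A * B)" unfolding AB using C by simp
    also have "\<dots> = (C * A) * B" by (rule assoc_mult_mat[symmetric, OF C(1) A B])
    also have "\<dots> = B" using C B by simp
    finally show ?thesis .
  qed
  show ?thesis unfolding mat_inv_def dA
  proof (rule someI2[of _ B])
    show "B \<in> carrier_mat n n \<and> A * B = 1\<^sub>m n \<and> B * A = 1\<^sub>m n" using B AB BA by blast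
  next
    fix C assume "C \<in> carrier_mat n n \<and> A * C = 1\<^sub>m n \<and> C * A = 1\<^sub>m n"
    then show "C = B" using uniq by blast
  qed
qed

lemma smult_smult_mat: "a \<cdot>\<^sub>m (b \<cdot>\<^sub>m (M :: 'a::semiring_0 mat)) = (a * b) \<cdot>\<^sub>m M"
  by (rule eq_matI) (auto simp: mult.assoc)

lemma one_smult_mat': "1 \<cdot>\<^sub>m (M :: 'a::semiring_1 mat) = M"
  by (rule eq_matI) auto

context fixes n :: nat
begin

lemmas asc = assoc_mult_mat[where n\<^sub>1=n and n\<^sub>2=n and n\<^sub>3=n and n\<^sub>4=n]
lemmas dl = mult_add_distrib_mat[where nr=n and n=n and nc=n] mult_minus_distrib_mat[where nr=n and n=n and nc=n]
lemmas dr = add_mult_distrib_mat[where nr=n and n=n and nc=n] minus_mult_distrib_mat[where nr=n and n=n and nc=n]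
lemma cm1[simp]: "A \<in> carrier_mat n n \<Longrightarrow> B \<in> carrier_mat n n \<Longrightarrow> (A::'b::semiring_0 mat) * B \<in> carrier_mat n n"
  by auto
lemma cm2[simp]: "A \<in> carrier_mat n n \<Longrightarrow> B \<in> carrier_mat n n \<Longrightarrow> (A::'b::plus mat) + B \<in> carrier_mat n n"
  by auto
lemma cm3[simp]: "A \<in> carrier_mat n n \<Longrightarrow> (A::'b::semiring_0 mat) *\<^sub>v v \<in> carrier_vec n"
  unfolding carrier_vec_def carrier_mat_def by auto

declare minus_carrier_mat[simp] one_smult_mat'[simp]

lemmas ascv = assoc_mult_mat_vec[where n\<^sub>1=n and n\<^sub>2=n and n\<^sub>3=n]

lemmas sm = mult_smult_assoc_mat[where nr=n and n=n and nc=n] mult_smult_distrib[where nr=n and n=n and nc=n]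

lemma pow_mat_Suc_left:
  fixes M :: "'a::semiring_1 mat"
  assumes M: "M \<in> carrier_mat n n"
  shows "M ^\<^sub>m Suc k = M * M ^\<^sub>m k"
proof (induction k)
  case 0 then show ?case using M by simp
next
  case (Suc k)
  have "M ^\<^sub>m Suc (Suc k) = M ^\<^sub>m Suc k * M" by (simp only: pow_mat.simps)
  also have "\<dots> = (M * M ^\<^sub>m k) * M" by (simp only: Suc.IH)
  also have "\<dots> = M * (M ^\<^sub>m k * M)" using M by (simp del: pow_mat.simps add: asc)
  finally show ?case by (simp only: pow_mat.simps)
qed

lemma pow_smult_mat:
  fixes M :: "'a::comm_ring_1 mat"
  assumes M: "M \<in> carrier_mat n n"
  shows "(c \<cdot>\<^sub>m M) ^\<^sub>m k = (c ^ k) \<cdot>\<^sub>m (M ^\<^sub>m k)"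
proof (induction k)
  case 0 then show ?case using M by (auto intro!: eq_matI)
next
  case (Suc k)
  have cM: "c \<cdot>\<^sub>m M \<in> carrier_mat n n" using M by simp
  have "(c \<cdot>\<^sub>m M) ^\<^sub>m Suc k = (c \<cdot>\<^sub>m M) * ((c ^ k) \<cdot>\<^sub>m (M ^\<^sub>m k))"
    unfolding pow_mat_Suc_left[OF cM] Suc ..
  also have "\<dots> = c \<cdot>\<^sub>m (M * (c ^ k \<cdot>\<^sub>m M ^\<^sub>m k))"
    using M by (simp only: mult_smult_assoc_mat[OF M smult_carrier_mat[OF pow_carrier_mat[OF M]]])
  also have "\<dots> = c \<cdot>\<^sub>m (c ^ k \<cdot>\<^sub>m (M * M ^\<^sub>m k))"
    by (simp only: mult_smult_distrib[OF M pow_carrier_mat[OF M]])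
  also have "\<dots> = (c * c ^ k) \<cdot>\<^sub>m (M * M ^\<^sub>m k)" by (rule smult_smult_mat)
  also have "\<dots> = c ^ Suc k \<cdot>\<^sub>m M ^\<^sub>m Suc k" unfolding pow_mat_Suc_left[OF M] power_Suc ..
  finally show ?case .
qed

lemma pow_mat_comm:
  fixes M :: "'a::semiring_1 mat"
  assumes M: "M \<in> carrier_mat n n" and B: "B \<in> carrier_mat n n" and c: "M * B = B * M"
  shows "M ^\<^sub>m k * B = B * M ^\<^sub>m k"
proof (induction k)
  case 0 then show ?case using M B by simp
next
  case (Suc k)
  have "M ^\<^sub>m Suc k * B = M ^\<^sub>m k * (M * B)" using M B by (simp add: asc)
  also have "\<dots> = (M ^\<^sub>m k * B) * M" unfolding c using M B by (simp add: asc)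
  also have "\<dots> = B * M ^\<^sub>m Suc k" unfolding Suc using M B by (simp add: asc)
  finally show ?case .
qed

lemma pow_mult_comm:
  fixes A B :: "'a::comm_semiring_1 mat"
  assumes A: "A \<in> carrier_mat n n" and B: "B \<in> carrier_mat n n" and c: "A * B = B * A"
  shows "(A * B) ^\<^sub>m k = A ^\<^sub>m k * B ^\<^sub>m k"
proof (induction k)
  case 0 then show ?case using A B by simp
next
  case (Suc k)
  have "(A * B) ^\<^sub>m Suc k = A ^\<^sub>m k * (B ^\<^sub>m k * (A * B))" using A B Suc by (simp add: asc)
  also have "B ^\<^sub>m k * (A * B) = A * (B ^\<^sub>m k * B)"
  proof -
    have "B ^\<^sub>m k * (A * B) = (B ^\<^sub>m k * A) * B" using A B by (simp add: asc)
    also have "B ^\<^sub>m k * A = A * B ^\<^sub>m k" using pow_mat_comm[OF B A c[symmetric]] by simp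
    finally show ?thesis using A B by (simp add: asc)
  qed
  finally show ?case using A B by (simp add: asc)
qed


lemma pow_mat_add:
  fixes M :: "'a::semiring_1 mat"
  assumes M: "M \<in> carrier_mat n n"
  shows "M ^\<^sub>m (i + j) = M ^\<^sub>m i * M ^\<^sub>m j"
proof (induction j)
  case 0 then show ?case using M by simp
next
  case (Suc j)
  have "M ^\<^sub>m (i + Suc j) = M ^\<^sub>m (i + j) * M" by simp
  also have "\<dots> = M ^\<^sub>m i * (M ^\<^sub>m j * M)" unfolding Suc using M by (simp add: asc)
  finally show ?case by simp
qed

fun geo :: "nat \<Rightarrow> 'a::comm_ring_1 mat \<Rightarrow> nat \<Rightarrow> 'a mat" where
  "geo nn M 0 = 0\<^sub>m nn nn"
| "geo nn M (Suc k) = 1\<^sub>m nn + M * geo nn M k"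

lemma geo_carrier: "M \<in> carrier_mat n n \<Longrightarrow> geo n M k \<in> carrier_mat n n"
  by (induction k) auto

lemma geo_comm_gen:
  fixes M :: "'a::comm_ring_1 mat"
  assumes M: "M \<in> carrier_mat n n" and X: "X \<in> carrier_mat n n" and c: "X * M = M * X"
  shows "X * geo n M k = geo n M k * X"
proof (induction k)
  case 0 then show ?case using X by simp
next
  case (Suc k)
  have G: "geo n M k \<in> carrier_mat n n" using geo_carrier[OF M] .
  have "X * geo n M (Suc k) = X + (X * M) * geo n M k"
    using M G X by (simp add: dl asc)
  also have "(X * M) * geo n M k = M * (X * geo n M k)" unfolding c using M G X by (simp add: asc)
  also have "\<dots> = (M * geo n M k) * X" unfolding Suc using M G X by (simp add: asc)
  also have "X + (M * geo n M k) * X = geo n M (Suc k) * X"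
    using M G X by (simp add: dr)
  finally show ?case .
qed

lemma geo_mult:
  fixes M :: "'a::comm_ring_1 mat"
  assumes M: "M \<in> carrier_mat n n"
  shows "(1\<^sub>m n - M) * geo n M k = 1\<^sub>m n - M ^\<^sub>m k"
proof (induction k)
  case 0 then show ?case using M by (auto intro!: eq_matI)
next
  case (Suc k)
  have G: "geo n M k \<in> carrier_mat n n" using geo_carrier[OF M] .
  have "(1\<^sub>m n - M) * geo n M (Suc k) = (1\<^sub>m n - M) + ((1\<^sub>m n - M) * M) * geo n M k"
    using M G by (simp add: dl asc)
  also have "(1\<^sub>m n - M) * M = M * (1\<^sub>m n - M)"
    using M by (simp add: dl dr)
  also have "(M * (1\<^sub>m n - M)) * geo n M k = M * (1\<^sub>m n - M ^\<^sub>m k)"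
    unfolding Suc[symmetric] using M G by (simp add: asc)
  also have "\<dots> = M - M ^\<^sub>m Suc k"
    unfolding pow_mat_Suc_left[OF M] using M by (simp add: dl)
  also have "(1\<^sub>m n - M) + (M - M ^\<^sub>m Suc k) = 1\<^sub>m n - M ^\<^sub>m Suc k"
    using M by (intro eq_matI) auto
  finally show ?case .
qed

lemma inv_comm:
  fixes A B X :: "'a::semiring_1 mat"
  assumes A: "A \<in> carrier_mat n n" and B: "B \<in> carrier_mat n n" and X: "X \<in> carrier_mat n n"
    and AB: "A * B = 1\<^sub>m n" and BA: "B * A = 1\<^sub>m n" and c: "X * A = A * X"
  shows "X * B = B * X"
proof -
  have "X * B = (B * A) * (X * B)" unfolding BA using X B by simp
  also have "\<dots> = B * ((X * A) * B)" unfolding c using A B X by (simp add: asc)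
  also have "\<dots> = B * X" using A B X by (simp add: asc AB)
  finally show ?thesis .
qed

lemma smult_inv_pair:
  fixes X Y :: "'a::field mat"
  assumes a: "a \<noteq> 0" and X: "X \<in> carrier_mat n n" and Y: "Y \<in> carrier_mat n n"
  shows "(a \<cdot>\<^sub>m X) * ((1 / a) \<cdot>\<^sub>m Y) = X * Y" "((1 / a) \<cdot>\<^sub>m Y) * (a \<cdot>\<^sub>m X) = Y * X"
  using a X Y by (simp_all add: sm smult_smult_mat)

lemma nil_inv:
  fixes N :: "'a::field mat"
  assumes N: "N \<in> carrier_mat n n" and nil: "N ^\<^sub>m m = 0\<^sub>m n n" and a: "a \<noteq> 0"
  defines "B \<equiv> (1 / a) \<cdot>\<^sub>m geo n ((- 1 / a) \<cdot>\<^sub>m N) m"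
  shows "B \<in> carrier_mat n n" "(a \<cdot>\<^sub>m 1\<^sub>m n + N) * B = 1\<^sub>m n" "B * (a \<cdot>\<^sub>m 1\<^sub>m n + N) = 1\<^sub>m n"
    "N * B = B * N"
proof -
  let ?M = "(- 1 / a) \<cdot>\<^sub>m N"
  let ?G = "geo n ?M m"
  have M: "?M \<in> carrier_mat n n" using N by simp
  have G: "?G \<in> carrier_mat n n" using geo_carrier[OF M] .
  show B: "B \<in> carrier_mat n n" unfolding B_def using G by simp
  have e: "a \<cdot>\<^sub>m 1\<^sub>m n + N = a \<cdot>\<^sub>m (1\<^sub>m n - ?M)"
    using N a by (intro eq_matI) (auto simp: field_simps)
  have Mm: "?M ^\<^sub>m m = 0\<^sub>m n n" unfolding pow_smult_mat[OF N] nil by simp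
  have cM: "?G * ?M = ?M * ?G" using geo_comm_gen[OF M M refl] by simp
  have cN: "N * ?G = ?G * N"
  proof -
    have "N * ?M = ?M * N" using N by (simp add: sm)
    from geo_comm_gen[OF M N this] show ?thesis .
  qed
  have 1: "(1\<^sub>m n - ?M) * ?G = 1\<^sub>m n" unfolding geo_mult[OF M] Mm using N by (intro eq_matI) auto
  have 2: "?G * (1\<^sub>m n - ?M) = 1\<^sub>m n"
  proof -
    have "?G * (1\<^sub>m n - ?M) = (1\<^sub>m n - ?M) * ?G" using G M cM by (simp add: dl dr)
    then show ?thesis using 1 by simp
  qed
  have cM1: "1\<^sub>m n - ?M \<in> carrier_mat n n" using M by simp
  show "(a \<cdot>\<^sub>m 1\<^sub>m n + N) * B = 1\<^sub>m n" unfolding e B_def smult_inv_pair[OF a cM1 G] by (rule 1)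
  show "B * (a \<cdot>\<^sub>m 1\<^sub>m n + N) = 1\<^sub>m n" unfolding e B_def smult_inv_pair[OF a cM1 G] by (rule 2)
  show "N * B = B * N" unfolding B_def using N G cN by (simp add: sm)
qed

lemma mat_vec_unit:
  fixes A :: "'a::semiring_1 mat"
  assumes A: "A \<in> carrier_mat n n" and i: "i < n" and j: "j < n"
  shows "(A *\<^sub>v unit_vec n j) $ i = A $$ (i, j)"
  using A i j by (simp add: scalar_prod_def unit_vec_def row_def if_distrib cong: if_cong)

lemma nil_bound:
  fixes N :: "'a::field mat"
  assumes N: "N \<in> carrier_mat n n" and nil: "N ^\<^sub>m m = 0\<^sub>m n n"
  shows "N ^\<^sub>m n = 0\<^sub>m n n"
proof -
  define w where "w i v = N ^\<^sub>m i *\<^sub>v v" for i v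
  have vz: "N ^\<^sub>m n *\<^sub>v v = 0\<^sub>v n" if v: "v \<in> carrier_vec n" for v
  proof (rule ccontr)
    assume nz: "N ^\<^sub>m n *\<^sub>v v \<noteq> 0\<^sub>v n"
    have wc: "w i v \<in> carrier_vec n" for i unfolding w_def using N v by simp
    have wshift: "N ^\<^sub>m k *\<^sub>v w i v = w (k + i) v" for k i
      unfolding w_def using N v by (simp add: pow_mat_add ascv)
    have wbig: "w i v = 0\<^sub>v n" if "i \<ge> m" for i
    proof -
      have "w i v = N ^\<^sub>m ((i - m) + m) *\<^sub>v v" unfolding w_def using that by simp
      also have "\<dots> = 0\<^sub>v n" unfolding pow_mat_add[OF N] nil using N v
        by (intro eq_vecI) (auto simp: ascv scalar_prod_def)
      finally show ?thesis .
    qed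
    define S where "S = {i. w i v \<noteq> 0\<^sub>v n}"
    have Sfin: "finite S" 
    proof -
      have "S \<subseteq> {..<m}" unfolding S_def using wbig by (auto simp: not_less)
      then show ?thesis using finite_subset by blast
    qed
    have nS: "n \<in> S" unfolding S_def w_def using nz by simp
    define t where "t = Max S"
    have tS: "t \<in> S" unfolding t_def using Sfin nS by (intro Max_in) auto
    have nt: "n \<le> t" unfolding t_def using Sfin nS by simp
    have wgt: "w i v = 0\<^sub>v n" if "i > t" for i
    proof (rule ccontr)
      assume "w i v \<noteq> 0\<^sub>v n"
      then have "i \<in> S" unfolding S_def by simp
      then have "i \<le> t" unfolding t_def using Sfin by simp
      then show False using that by simp
    qed
    define Mt where "Mt = mat (Suc n) (Suc n) (\<lambda>(r,i). if r < n then w i v $ r else 0)"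
    have Mtc: "Mt \<in> carrier_mat (Suc n) (Suc n)" unfolding Mt_def by simp
    have "det Mt = 0"
    proof -
      have "Mt = mat\<^sub>r (Suc n) (Suc n) (\<lambda>i. if i = n then 0\<^sub>v (Suc n) else row Mt i)"
        unfolding Mt_def by (intro eq_matI) auto
      also have "det \<dots> = 0"
      proof (rule det_row_0[of n "Suc n" "\<lambda>i. row Mt i"])
        show "(\<lambda>i. row Mt i) \<in> {0..<Suc n} \<rightarrow> carrier_vec (Suc n)"
        proof
          fix i show "row Mt i \<in> carrier_vec (Suc n)" unfolding row_def Mt_def by simp
        qed
      qed simp
      finally show ?thesis .
    qed
    then obtain c where c: "c \<in> carrier_vec (Suc n)" "c \<noteq> 0\<^sub>v (Suc n)" "Mt *\<^sub>v c = 0\<^sub>v (Suc n)"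
      using det_0_iff_vec_prod_zero_field[OF Mtc] by blast
    have csum: "(\<Sum>i<Suc n. w i v $ r * c $ i) = 0" if r: "r < n" for r
    proof -
      have "(Mt *\<^sub>v c) $ r = 0" using c(3) r by simp
      then show ?thesis using r c(1) unfolding Mt_def
        by (simp add: scalar_prod_def row_def lessThan_atLeast0)
    qed
    have "\<exists>i<Suc n. c $ i \<noteq> 0"
    proof (rule ccontr)
      assume "\<not> ?thesis"
      then have "c = 0\<^sub>v (Suc n)" using c(1) by (intro eq_vecI) auto
      then show False using c(2) by simp
    qed
    then obtain i0 where i0: "i0 < Suc n" "c $ i0 \<noteq> 0" by blast
    define j where "j = (LEAST i. c $ i \<noteq> 0)"
    have j: "j < Suc n" "c $ j \<noteq> 0"
      using i0 Least_le[of "\<lambda>i. c $ i \<noteq> 0" i0] LeastI[of "\<lambda>i. c $ i \<noteq> 0" i0]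
      unfolding j_def by auto
    have jmin: "c $ i = 0" if "i < j" for i
      using not_less_Least[of i "\<lambda>i. c $ i \<noteq> 0"] that unfolding j_def by blast
    have jt: "j \<le> t" using j nt by simp
    have "w t v $ r = 0" if r: "r < n" for r
    proof -
      define u where "u = vec n (\<lambda>r. \<Sum>i<Suc n. w i v $ r * c $ i)"
      have u0: "u = 0\<^sub>v n" unfolding u_def using csum by (intro eq_vecI) auto
      have uc: "u \<in> carrier_vec n" unfolding u_def by simp
      have "(N ^\<^sub>m (t - j) *\<^sub>v u) $ r = (\<Sum>i<Suc n. w (t - j + i) v $ r * c $ i)"
      proof -
        have "(N ^\<^sub>m (t - j) *\<^sub>v u) $ r = (\<Sum>s<n. (N ^\<^sub>m (t - j)) $$ (r, s) * (\<Sum>i<Suc n. w i v $ s * c $ i))"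
          using N r unfolding u_def by (simp add: scalar_prod_def row_def lessThan_atLeast0)
        also have "\<dots> = (\<Sum>s<n. \<Sum>i<Suc n. (N ^\<^sub>m (t - j)) $$ (r, s) * (w i v $ s * c $ i))"
          by (simp only: sum_distrib_left)
        also have "\<dots> = (\<Sum>i<Suc n. \<Sum>s<n. (N ^\<^sub>m (t - j)) $$ (r, s) * (w i v $ s * c $ i))"
          by (rule sum.swap)
        also have "\<dots> = (\<Sum>i<Suc n. (\<Sum>s<n. (N ^\<^sub>m (t - j)) $$ (r, s) * w i v $ s) * c $ i)"
          by (simp only: sum_distrib_right mult.assoc)
        also have "\<dots> = (\<Sum>i<Suc n. w (t - j + i) v $ r * c $ i)"
        proof (rule sum.cong[OF refl])
          fix i
          have "(N ^\<^sub>m (t - j) *\<^sub>v w i v) $ r = (\<Sum>s<n. (N ^\<^sub>m (t - j)) $$ (r, s) * w i v $ s)"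
            using N r wc[of i] by (simp add: scalar_prod_def row_def lessThan_atLeast0)
          then show "(\<Sum>s<n. (N ^\<^sub>m (t - j)) $$ (r, s) * w i v $ s) * c $ i = w (t - j + i) v $ r * c $ i"
            unfolding wshift by simp
        qed
        finally show ?thesis .
      qed
      also have "\<dots> = w t v $ r * c $ j"
      proof -
        let ?f = "\<lambda>i. w (t - j + i) v $ r * c $ i"
        have z: "?f i = 0" if i: "i \<in> {..<Suc n} - {j}" for i
        proof (cases "i < j")
          case True then show ?thesis using jmin by simp
        next
          case False
          then have "t - j + i > t" using i jt by auto
          then have "w (t - j + i) v = 0\<^sub>v n" by (rule wgt)
          then show ?thesis using r by simp
        qed
        have "(\<Sum>i<Suc n. ?f i) = ?f j + (\<Sum>i\<in>{..<Suc n} - {j}. ?f i)"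
          by (rule sum.remove) (use j in auto)
        also have "(\<Sum>i\<in>{..<Suc n} - {j}. ?f i) = 0" by (rule sum.neutral) (use z in blast)
        also have "?f j = w t v $ r * c $ j" using jt by simp
        finally show ?thesis by simp
      qed
      finally have eq2: "(N ^\<^sub>m (t - j) *\<^sub>v u) $ r = w t v $ r * c $ j" .
      have "(N ^\<^sub>m (t - j) *\<^sub>v u) $ r = 0" unfolding u0 using N r by simp
      then show ?thesis using eq2 j by simp
    qed
    then have "w t v = 0\<^sub>v n" using wc[of t] by (intro eq_vecI) auto
    then show False using tS unfolding S_def by simp
  qed
  show ?thesis
  proof (rule eq_matI)
    fix i j assume i: "i < dim_row (0\<^sub>m n n :: 'a mat)" and j: "j < dim_col (0\<^sub>m n n :: 'a mat)"
    have "(N ^\<^sub>m n) $$ (i, j) = (N ^\<^sub>m n *\<^sub>v unit_vec n j) $ i"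
      using mat_vec_unit[of "N ^\<^sub>m n" i j] N i j by simp
    also have "\<dots> = 0" unfolding vz[OF unit_vec_carrier] using i by simp
    finally show "(N ^\<^sub>m n) $$ (i, j) = 0\<^sub>m n n $$ (i, j)" using i j by simp
  qed (use N in auto)
qed
end

lemma pf_sum:
  fixes f :: "nat \<Rightarrow> 'b::comm_ring_1 mat \<Rightarrow> 'b"
  assumes "\<And>k. k < m \<Longrightarrow> f k \<in> poly_fun n"
  shows "(\<lambda>A. \<Sum>k<m. f k A) \<in> poly_fun n"
  using assms
proof (induction m)
  case 0 then show ?case using pf_const[of 0 n] by simp
next
  case (Suc m)
  have "(\<lambda>A. (\<Sum>k<m. f k A) + f m A) \<in> poly_fun n"
    by (rule pf_add) (use Suc in auto)
  then show ?case by simp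
qed

lemma morph_cong:
  assumes "is_morphism n X F" and "\<And>A. A \<in> X \<Longrightarrow> G A = F A"
  shows "is_morphism n X G"
  using assms unfolding is_morphism_def by auto

lemma morph_const:
  fixes C :: "'b::comm_ring_1 mat"
  assumes "C \<in> carrier_mat n n"
  shows "is_morphism n X (\<lambda>A. C)"
  unfolding is_morphism_def using assms by (auto intro!: bexI[OF _ pf_const])

lemma morph_id:
  assumes "X \<subseteq> carrier_mat n n"
  shows "is_morphism n X (\<lambda>A::'b::comm_ring_1 mat. A)"
  unfolding is_morphism_def using assms by (auto intro!: bexI[OF _ pf_coord])

lemma morph_ex:
  assumes "is_morphism n X F"
  shows "\<exists>P. \<forall>i j. (i < n \<and> j < n) \<longrightarrow> P i j \<in> poly_fun n \<and> (\<forall>A\<in>X. F A $$ (i,j) = P i j A)"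
proof -
  define P where "P i j = (SOME P. P \<in> poly_fun n \<and> (\<forall>A\<in>X. F A $$ (i,j) = P A))" for i j
  have H: "P i j \<in> poly_fun n \<and> (\<forall>A\<in>X. F A $$ (i,j) = P i j A)" if "i < n" "j < n" for i j
  proof -
    have "\<exists>P. P \<in> poly_fun n \<and> (\<forall>A\<in>X. F A $$ (i,j) = P A)"
      using assms that unfolding is_morphism_def by blast
    then show ?thesis unfolding P_def by (rule someI_ex)
  qed
  then show ?thesis by blast
qed

lemma morph_carrier:
  assumes "is_morphism n X F" "A \<in> X"
  shows "F A \<in> carrier_mat n n"
  using assms unfolding is_morphism_def by auto

lemma morph_add:
  fixes F G :: "'b::comm_ring_1 mat \<Rightarrow> 'b mat"
  assumes F: "is_morphism n X F" and G: "is_morphism n X G"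
  shows "is_morphism n X (\<lambda>A. F A + G A)"
proof -
  obtain P where P0: "\<forall>i j. (i < n \<and> j < n) \<longrightarrow> P i j \<in> poly_fun n \<and> (\<forall>A\<in>X. F A $$ (i,j) = P i j A)"
    using morph_ex[OF F] by blast
  have P: "\<And>i j. i < n \<Longrightarrow> j < n \<Longrightarrow> P i j \<in> poly_fun n"
    "\<And>i j A. i < n \<Longrightarrow> j < n \<Longrightarrow> A \<in> X \<Longrightarrow> F A $$ (i,j) = P i j A" using P0 by blast+
  obtain Q where Q0: "\<forall>i j. (i < n \<and> j < n) \<longrightarrow> Q i j \<in> poly_fun n \<and> (\<forall>A\<in>X. G A $$ (i,j) = Q i j A)"
    using morph_ex[OF G] by blast
  have Q: "\<And>i j. i < n \<Longrightarrow> j < n \<Longrightarrow> Q i j \<in> poly_fun n"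
    "\<And>i j A. i < n \<Longrightarrow> j < n \<Longrightarrow> A \<in> X \<Longrightarrow> G A $$ (i,j) = Q i j A" using Q0 by blast+
  show ?thesis unfolding is_morphism_def
  proof (intro conjI allI impI ballI)
    fix A assume "A \<in> X" then show "F A + G A \<in> carrier_mat n n"
      using morph_carrier[OF F] morph_carrier[OF G] by simp
  next
    fix i j assume ij: "i < n" "j < n"
    show "\<exists>R\<in>poly_fun n. \<forall>A\<in>X. (F A + G A) $$ (i, j) = R A"
    proof (rule bexI[of _ "\<lambda>A. P i j A + Q i j A"])
      show "(\<lambda>A. P i j A + Q i j A) \<in> poly_fun n" by (rule pf_add[OF P(1)[OF ij] Q(1)[OF ij]])
      show "\<forall>A\<in>X. (F A + G A) $$ (i, j) = P i j A + Q i j A"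
      proof
        fix A assume A: "A \<in> X"
        have "F A \<in> carrier_mat n n" "G A \<in> carrier_mat n n"
          using morph_carrier[OF F A] morph_carrier[OF G A] .
        then show "(F A + G A) $$ (i, j) = P i j A + Q i j A"
          using ij by (simp add: P(2)[OF ij A] Q(2)[OF ij A])
      qed
    qed
  qed
qed

lemma morph_smult:
  fixes F :: "'b::comm_ring_1 mat \<Rightarrow> 'b mat"
  assumes F: "is_morphism n X F"
  shows "is_morphism n X (\<lambda>A. c \<cdot>\<^sub>m F A)"
proof -
  obtain P where P0: "\<forall>i j. (i < n \<and> j < n) \<longrightarrow> P i j \<in> poly_fun n \<and> (\<forall>A\<in>X. F A $$ (i,j) = P i j A)"
    using morph_ex[OF F] by blast
  have P: "\<And>i j. i < n \<Longrightarrow> j < n \<Longrightarrow> P i j \<in> poly_fun n"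
    "\<And>i j A. i < n \<Longrightarrow> j < n \<Longrightarrow> A \<in> X \<Longrightarrow> F A $$ (i,j) = P i j A" using P0 by blast+
  show ?thesis unfolding is_morphism_def
  proof (intro conjI allI impI ballI)
    fix A assume "A \<in> X" then show "c \<cdot>\<^sub>m F A \<in> carrier_mat n n"
      using morph_carrier[OF F] by simp
  next
    fix i j assume ij: "i < n" "j < n"
    show "\<exists>R\<in>poly_fun n. \<forall>A\<in>X. (c \<cdot>\<^sub>m F A) $$ (i, j) = R A"
    proof (rule bexI[of _ "\<lambda>A. c * P i j A"])
      show "(\<lambda>A. c * P i j A) \<in> poly_fun n" by (rule pf_mult[OF pf_const P(1)[OF ij]])
      show "\<forall>A\<in>X. (c \<cdot>\<^sub>m F A) $$ (i, j) = c * P i j A"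
      proof
        fix A assume A: "A \<in> X"
        have "F A \<in> carrier_mat n n" using morph_carrier[OF F A] .
        then show "(c \<cdot>\<^sub>m F A) $$ (i, j) = c * P i j A"
          using ij by (simp add: P(2)[OF ij A])
      qed
    qed
  qed
qed

lemma morph_minus:
  fixes F G :: "'b::comm_ring_1 mat \<Rightarrow> 'b mat"
  assumes F: "is_morphism n X F" and G: "is_morphism n X G"
  shows "is_morphism n X (\<lambda>A. F A - G A)"
proof (rule morph_cong[OF morph_add[OF F morph_smult[OF G, of "-1"]]])
  fix A assume A: "A \<in> X"
  have "F A \<in> carrier_mat n n" "G A \<in> carrier_mat n n"
    using morph_carrier[OF F A] morph_carrier[OF G A] .
  then show "F A - G A = F A + (-1) \<cdot>\<^sub>m G A" by (intro eq_matI) auto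
qed

lemma morph_mult:
  fixes F G :: "'b::comm_ring_1 mat \<Rightarrow> 'b mat"
  assumes F: "is_morphism n X F" and G: "is_morphism n X G"
  shows "is_morphism n X (\<lambda>A. F A * G A)"
proof -
  obtain P where P0: "\<forall>i j. (i < n \<and> j < n) \<longrightarrow> P i j \<in> poly_fun n \<and> (\<forall>A\<in>X. F A $$ (i,j) = P i j A)"
    using morph_ex[OF F] by blast
  have P: "\<And>i j. i < n \<Longrightarrow> j < n \<Longrightarrow> P i j \<in> poly_fun n"
    "\<And>i j A. i < n \<Longrightarrow> j < n \<Longrightarrow> A \<in> X \<Longrightarrow> F A $$ (i,j) = P i j A" using P0 by blast+
  obtain Q where Q0: "\<forall>i j. (i < n \<and> j < n) \<longrightarrow> Q i j \<in> poly_fun n \<and> (\<forall>A\<in>X. G A $$ (i,j) = Q i j A)"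
    using morph_ex[OF G] by blast
  have Q: "\<And>i j. i < n \<Longrightarrow> j < n \<Longrightarrow> Q i j \<in> poly_fun n"
    "\<And>i j A. i < n \<Longrightarrow> j < n \<Longrightarrow> A \<in> X \<Longrightarrow> G A $$ (i,j) = Q i j A" using Q0 by blast+
  have cF: "F A \<in> carrier_mat n n" if "A \<in> X" for A using F that unfolding is_morphism_def by auto
  have cG: "G A \<in> carrier_mat n n" if "A \<in> X" for A using G that unfolding is_morphism_def by auto
  show ?thesis unfolding is_morphism_def
  proof (intro conjI allI impI ballI)
    fix A assume "A \<in> X" then show "F A * G A \<in> carrier_mat n n" using cF cG by (meson mult_carrier_mat)
  next
    fix i j assume ij: "i < n" "j < n"
    have pf: "(\<lambda>A. \<Sum>k<n. P i k A * Q k j A) \<in> poly_fun n"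
    proof (rule pf_sum)
      fix k assume k: "k < n"
      show "(\<lambda>A. P i k A * Q k j A) \<in> poly_fun n" by (rule pf_mult[OF P(1)[OF ij(1) k] Q(1)[OF k ij(2)]])
    qed
    have eqA: "(F A * G A) $$ (i, j) = (\<Sum>k<n. P i k A * Q k j A)" if A: "A \<in> X" for A
    proof -
      have "(F A * G A) $$ (i, j) = (\<Sum>k<n. F A $$ (i,k) * G A $$ (k,j))"
        using cF[OF A] cG[OF A] ij by (simp add: scalar_prod_def lessThan_atLeast0)
      also have "\<dots> = (\<Sum>k<n. P i k A * Q k j A)"
        by (rule sum.cong[OF refl]) (use ij A in \<open>simp add: P(2) Q(2)\<close>)
      finally show ?thesis .
    qed
    show "\<exists>R\<in>poly_fun n. \<forall>A\<in>X. (F A * G A) $$ (i, j) = R A"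
      by (rule bexI[OF _ pf]) (use eqA in auto)
  qed
qed

lemma morph_geo:
  fixes M :: "'b::comm_ring_1 mat \<Rightarrow> 'b mat"
  assumes M: "is_morphism n X M"
  shows "is_morphism n X (\<lambda>A. geo n (M A) k)"
proof (induction k)
  case 0 then show ?case using morph_const[of "0\<^sub>m n n" n X] by simp
next
  case (Suc k)
  have "is_morphism n X (\<lambda>A. 1\<^sub>m n + M A * geo n (M A) k)"
    by (rule morph_add[OF morph_const morph_mult[OF M Suc]]) simp
  then show ?case by simp
qed



context fixes n :: nat
begin

lemmas asc2 = asc[where n=n]
lemmas dl2 = dl[where n=n]
lemmas dr2 = dr[where n=n]
lemmas sm2 = sm[where n=n]

lemma nil_mats_D:
  assumes "x \<in> nil_mats n"
  shows "x \<in> carrier_mat n n" "x ^\<^sub>m n = 0\<^sub>m n n"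
  using assms nil_bound[of x n] unfolding nil_mats_def by auto

lemma nil_matsI:
  assumes "x \<in> carrier_mat n n" "x ^\<^sub>m m = 0\<^sub>m n n"
  shows "x \<in> nil_mats n"
  using assms unfolding nil_mats_def by auto

lemma comm_minus_one:
  fixes g B :: "'a::ring_1 mat"
  assumes g: "g \<in> carrier_mat n n" and B: "B \<in> carrier_mat n n" and c: "g * B = B * g"
  shows "(g - 1\<^sub>m n) * B = B * (g - 1\<^sub>m n)"
  using g B c by (simp add: dl2 dr2)

lemma uni_facts:
  fixes \<alpha> d :: "'a::field"
  assumes g: "g \<in> uni_mats n" and cd: "\<alpha> - d \<noteq> 0"
  defines "N \<equiv> g - 1\<^sub>m n" and "A \<equiv> \<alpha> \<cdot>\<^sub>m 1\<^sub>m n - d \<cdot>\<^sub>m g"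
  shows "g \<in> carrier_mat n n" "N \<in> carrier_mat n n" "A \<in> carrier_mat n n" "mat_inv A \<in> carrier_mat n n"
    "A * mat_inv A = 1\<^sub>m n" "mat_inv A * A = 1\<^sub>m n" "g * mat_inv A = mat_inv A * g"
    "N * mat_inv A = mat_inv A * N" "N ^\<^sub>m n = 0\<^sub>m n n"
    "mat_inv A = (1 / (\<alpha> - d)) \<cdot>\<^sub>m geo n ((- 1 / (\<alpha> - d)) \<cdot>\<^sub>m ((- d) \<cdot>\<^sub>m N)) n"
proof -
  let ?c = "\<alpha> - d"
  show gc: "g \<in> carrier_mat n n" using g unfolding uni_mats_def by auto
  have "N \<in> nil_mats n" using g unfolding uni_mats_def N_def by auto
  then show Nc: "N \<in> carrier_mat n n" and Nn: "N ^\<^sub>m n = 0\<^sub>m n n" using nil_mats_D by auto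
  show Ac: "A \<in> carrier_mat n n" unfolding A_def using gc by simp
  have Ae: "A = ?c \<cdot>\<^sub>m 1\<^sub>m n + (- d) \<cdot>\<^sub>m N"
    unfolding A_def N_def using gc by (intro eq_matI) (auto simp: algebra_simps)
  have N'c: "(- d) \<cdot>\<^sub>m N \<in> carrier_mat n n" using Nc by simp
  have N'n: "((- d) \<cdot>\<^sub>m N) ^\<^sub>m n = 0\<^sub>m n n" unfolding pow_smult_mat[OF Nc] Nn by simp
  note I = nil_inv[OF N'c N'n cd]
  let ?B = "(1 / (\<alpha> - d)) \<cdot>\<^sub>m geo n ((- 1 / (\<alpha> - d)) \<cdot>\<^sub>m ((- d) \<cdot>\<^sub>m N)) n"
  have inv: "mat_inv A = ?B" unfolding Ae by (rule mat_inv_eq[OF _ I(1) I(2) I(3)]) (use Nc in simp)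
  then show "mat_inv A = ?B" .
  show Bc: "mat_inv A \<in> carrier_mat n n" unfolding inv by (rule I(1))
  have "A * ?B = 1\<^sub>m n" unfolding Ae by (rule I(2))
  then show AB: "A * mat_inv A = 1\<^sub>m n" unfolding inv .
  have "?B * A = 1\<^sub>m n" unfolding Ae by (rule I(3))
  then show BA: "mat_inv A * A = 1\<^sub>m n" unfolding inv .
  have gA: "g * A = A * g" unfolding A_def using gc by (simp add: dl2 dr2 sm2)
  show gB: "g * mat_inv A = mat_inv A * g" by (rule inv_comm[OF Ac Bc gc AB BA gA])
  show "N * mat_inv A = mat_inv A * N" unfolding N_def by (rule comm_minus_one[OF gc Bc gB])
qed

lemma s_map_uni:
  fixes \<alpha> :: "'a::field"
  assumes g: "g \<in> uni_mats n"
  shows "s_map n q \<alpha> g = (g - 1\<^sub>m n) * mat_inv (\<alpha> \<cdot>\<^sub>m 1\<^sub>m n - \<alpha> ^ q \<cdot>\<^sub>m g)"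
  unfolding s_map_def ..

lemma s_nil:
  fixes \<alpha> :: "'a::field"
  assumes g: "g \<in> uni_mats n" and cd: "\<alpha> - \<alpha> ^ q \<noteq> 0"
  shows "s_map n q \<alpha> g \<in> nil_mats n"
proof -
  note F = uni_facts[OF g cd]
  let ?N = "g - 1\<^sub>m n" and ?B = "mat_inv (\<alpha> \<cdot>\<^sub>m 1\<^sub>m n - \<alpha> ^ q \<cdot>\<^sub>m g)"
  have "(?N * ?B) ^\<^sub>m n = ?N ^\<^sub>m n * ?B ^\<^sub>m n" by (rule pow_mult_comm[OF F(2) F(4) F(8)])
  also have "\<dots> = 0\<^sub>m n n" unfolding F(9) by (rule left_mult_zero_mat) (use F(4) in simp)
  finally show ?thesis unfolding s_map_def using F(2) F(4) by (intro nil_matsI) auto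
qed

lemma s_left_inv:
  fixes \<alpha> :: "'a::field"
  assumes g: "g \<in> uni_mats n" and cd: "\<alpha> - \<alpha> ^ q \<noteq> 0"
  shows "s_inv_map n q \<alpha> (s_map n q \<alpha> g) = g"
proof -
  note F = uni_facts[OF g cd]
  let ?c = "\<alpha> - \<alpha> ^ q" and ?d = "\<alpha> ^ q"
  let ?N = "g - 1\<^sub>m n" and ?A = "\<alpha> \<cdot>\<^sub>m 1\<^sub>m n - \<alpha> ^ q \<cdot>\<^sub>m g"
  let ?B = "mat_inv ?A"
  have gc: "g \<in> carrier_mat n n" and Nc: "?N \<in> carrier_mat n n" and Ac: "?A \<in> carrier_mat n n"
    and Bc: "?B \<in> carrier_mat n n" using F by auto
  have e1: "1\<^sub>m n + ?d \<cdot>\<^sub>m (?N * ?B) = ?c \<cdot>\<^sub>m ?B"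
  proof -
    have "?A + ?d \<cdot>\<^sub>m ?N = ?c \<cdot>\<^sub>m 1\<^sub>m n" using gc by (intro eq_matI) (auto simp: algebra_simps)
    then have "(?A + ?d \<cdot>\<^sub>m ?N) * ?B = ?c \<cdot>\<^sub>m ?B" using Bc by (simp add: sm2)
    moreover have "(?A + ?d \<cdot>\<^sub>m ?N) * ?B = 1\<^sub>m n + ?d \<cdot>\<^sub>m (?N * ?B)"
      using Ac Nc Bc F(5) by (simp add: dr2 sm2)
    ultimately show ?thesis by simp
  qed
  have e2: "\<alpha> \<cdot>\<^sub>m (?N * ?B) + 1\<^sub>m n = ?c \<cdot>\<^sub>m (g * ?B)"
  proof -
    have "\<alpha> \<cdot>\<^sub>m ?N + ?A = ?c \<cdot>\<^sub>m g" using gc by (intro eq_matI) (auto simp: algebra_simps)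
    then have "(\<alpha> \<cdot>\<^sub>m ?N + ?A) * ?B = ?c \<cdot>\<^sub>m (g * ?B)" using Bc gc by (simp add: sm2)
    moreover have "(\<alpha> \<cdot>\<^sub>m ?N + ?A) * ?B = \<alpha> \<cdot>\<^sub>m (?N * ?B) + 1\<^sub>m n"
      using Ac Nc Bc F(5) by (simp add: dr2 sm2)
    ultimately show ?thesis by simp
  qed
  have inv: "mat_inv (?c \<cdot>\<^sub>m ?B) = (1 / ?c) \<cdot>\<^sub>m ?A"
  proof (rule mat_inv_eq)
    show "?c \<cdot>\<^sub>m ?B * ((1 / ?c) \<cdot>\<^sub>m ?A) = 1\<^sub>m n"
      unfolding smult_inv_pair(1)[OF cd Bc Ac] by (rule F(6))
    show "(1 / ?c) \<cdot>\<^sub>m ?A * (?c \<cdot>\<^sub>m ?B) = 1\<^sub>m n"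
      unfolding smult_inv_pair(2)[OF cd Bc Ac] by (rule F(5))
  qed (use Ac Bc in auto)
  have "s_inv_map n q \<alpha> (s_map n q \<alpha> g) = ((1 / ?c) \<cdot>\<^sub>m ?A) * (?c \<cdot>\<^sub>m (g * ?B))"
    unfolding s_inv_map_def s_map_def e1 e2 inv ..
  also have "\<dots> = ?A * (g * ?B)" using smult_inv_pair(2)[OF cd _ Ac, of "g * ?B"] gc Bc by simp
  also have "\<dots> = ?A * (?B * g)" unfolding F(7) ..
  also have "\<dots> = (?A * ?B) * g" using Ac Bc gc by (simp add: asc2)
  also have "\<dots> = g" unfolding F(5) using gc by simp
  finally show ?thesis .
qed


lemma cancel_l:
  fixes A B Z :: "'a::semiring_1 mat"
  assumes "A \<in> carrier_mat n n" "B \<in> carrier_mat n n" "Z \<in> carrier_mat n n" "A * B = 1\<^sub>m n"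
  shows "A * (B * Z) = Z"
proof -
  have "(A * B) * Z = A * (B * Z)" by (rule asc2) (use assms in auto)
  then show ?thesis using assms by simp
qed

lemma conj_mult:
  fixes h H X Z :: "'a::semiring_1 mat"
  assumes h: "h \<in> carrier_mat n n" and H: "H \<in> carrier_mat n n" and X: "X \<in> carrier_mat n n"
    and Z: "Z \<in> carrier_mat n n" and Hh: "H * h = 1\<^sub>m n"
  shows "(h * X * H) * (h * Z * H) = h * (X * Z) * H"
  using assms by (simp add: asc2 cancel_l[OF H h _ Hh])

lemma GL_inv:
  fixes h :: "'a::field mat"
  assumes h: "h \<in> GL n"
  shows "h \<in> carrier_mat n n" "mat_inv h \<in> carrier_mat n n" "h * mat_inv h = 1\<^sub>m n" "mat_inv h * h = 1\<^sub>m n"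
proof -
  show hc: "h \<in> carrier_mat n n" using h unfolding GL_def by auto
  have "det h \<noteq> 0" using h unfolding GL_def by auto
  from det_non_zero_imp_unit[OF hc this, of "()"]
  obtain H where H: "H \<in> carrier_mat n n" "H * h = 1\<^sub>m n" "h * H = 1\<^sub>m n"
    unfolding Units_def by (auto simp: ring_mat_simps)
  have "mat_inv h = H" by (rule mat_inv_eq[OF hc H(1) H(3) H(2)])
  then show "mat_inv h \<in> carrier_mat n n" "h * mat_inv h = 1\<^sub>m n" "mat_inv h * h = 1\<^sub>m n" using H by auto
qed

lemma s_equiv:
  fixes \<alpha> :: "'a::field"
  assumes h: "h \<in> GL n" and g: "g \<in> uni_mats n" and cd: "\<alpha> - \<alpha> ^ q \<noteq> 0"
  shows "s_map n q \<alpha> (h * g * mat_inv h) = h * s_map n q \<alpha> g * mat_inv h"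
proof -
  note F = uni_facts[OF g cd]
  note HI = GL_inv[OF h]
  let ?H = "mat_inv h" and ?d = "\<alpha> ^ q"
  let ?N = "g - 1\<^sub>m n" and ?A = "\<alpha> \<cdot>\<^sub>m 1\<^sub>m n - \<alpha> ^ q \<cdot>\<^sub>m g"
  let ?B = "mat_inv ?A"
  have hc: "h \<in> carrier_mat n n" and Hc: "?H \<in> carrier_mat n n" using HI by auto
  have gc: "g \<in> carrier_mat n n" and Nc: "?N \<in> carrier_mat n n" and Ac: "?A \<in> carrier_mat n n"
    and Bc: "?B \<in> carrier_mat n n" using F by auto
  have e1: "h * g * ?H - 1\<^sub>m n = h * ?N * ?H"
    using hc Hc gc HI(3) by (simp add: dl2 dr2)
  have e2: "\<alpha> \<cdot>\<^sub>m 1\<^sub>m n - ?d \<cdot>\<^sub>m (h * g * ?H) = h * ?A * ?H"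
    using hc Hc gc HI(3) by (simp add: dl2 dr2 sm2)
  have e3: "mat_inv (h * ?A * ?H) = h * ?B * ?H"
  proof (rule mat_inv_eq)
    show "h * ?A * ?H * (h * ?B * ?H) = 1\<^sub>m n"
      unfolding conj_mult[OF hc Hc Ac Bc HI(4)] F(5) using hc Hc HI(3) by simp
    show "h * ?B * ?H * (h * ?A * ?H) = 1\<^sub>m n"
      unfolding conj_mult[OF hc Hc Bc Ac HI(4)] F(6) using hc Hc HI(3) by simp
  qed (use hc Hc Ac Bc in auto)
  show ?thesis unfolding s_map_def e1 e2 e3 conj_mult[OF hc Hc Nc Bc HI(4)] ..
qed

lemma nil_side:
  fixes \<alpha> :: "'a::field"
  assumes x: "x \<in> nil_mats n" and cd: "\<alpha> - \<alpha> ^ q \<noteq> 0"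
  shows "s_inv_map n q \<alpha> x \<in> uni_mats n \<and> s_map n q \<alpha> (s_inv_map n q \<alpha> x) = x"
proof -
  let ?c = "\<alpha> - \<alpha> ^ q" and ?d = "\<alpha> ^ q"
  have xc: "x \<in> carrier_mat n n" and xn: "x ^\<^sub>m n = 0\<^sub>m n n" using nil_mats_D[OF x] by auto
  let ?E = "1\<^sub>m n + ?d \<cdot>\<^sub>m x"
  let ?C = "mat_inv ?E"
  have dxc: "?d \<cdot>\<^sub>m x \<in> carrier_mat n n" using xc by simp
  have dxn: "(?d \<cdot>\<^sub>m x) ^\<^sub>m n = 0\<^sub>m n n" unfolding pow_smult_mat[OF xc] xn by simp
  note I = nil_inv[OF dxc dxn one_neq_zero]
  have Ee: "?E = 1 \<cdot>\<^sub>m 1\<^sub>m n + ?d \<cdot>\<^sub>m x" by simp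
  have Ec: "?E \<in> carrier_mat n n" using xc by simp
  have Cinv: "?C = (1 / 1) \<cdot>\<^sub>m geo n ((- 1 / 1) \<cdot>\<^sub>m (?d \<cdot>\<^sub>m x)) n"
    unfolding Ee by (rule mat_inv_eq[OF _ I(1) I(2) I(3)]) (use xc in simp)
  have Cc: "?C \<in> carrier_mat n n" unfolding Cinv by (rule I(1))
  have EC: "?E * ?C = 1\<^sub>m n" unfolding Cinv by (subst Ee, rule I(2))
  have CE: "?C * ?E = 1\<^sub>m n" unfolding Cinv by (subst Ee, rule I(3))
  have xE: "x * ?E = ?E * x" using xc by (simp add: dl2 dr2 sm2)
  have xC: "x * ?C = ?C * x" by (rule inv_comm[OF Ec Cc xc EC CE xE])
  define y where "y = s_inv_map n q \<alpha> x"
  have ye: "y = ?C * (\<alpha> \<cdot>\<^sub>m x + 1\<^sub>m n)" unfolding y_def s_inv_map_def ..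
  have yc: "y \<in> carrier_mat n n" unfolding ye using Cc xc by simp
  have ym1: "y - 1\<^sub>m n = ?c \<cdot>\<^sub>m (?C * x)"
  proof -
    have "y - 1\<^sub>m n = ?C * (\<alpha> \<cdot>\<^sub>m x + 1\<^sub>m n) - ?C * ?E" unfolding ye CE ..
    also have "\<dots> = ?c \<cdot>\<^sub>m (?C * x)"
      using Cc xc by (simp add: dl2 sm2) (intro eq_matI, auto simp: algebra_simps)
    finally show ?thesis .
  qed
  have yuni: "y \<in> uni_mats n"
  proof -
    have "(y - 1\<^sub>m n) ^\<^sub>m n = ?c ^ n \<cdot>\<^sub>m (?C ^\<^sub>m n * x ^\<^sub>m n)"
      unfolding ym1 pow_smult_mat[OF cm1[OF Cc xc]] pow_mult_comm[OF Cc xc xC[symmetric]] ..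
    also have "\<dots> = 0\<^sub>m n n"
    proof -
      have "?C ^\<^sub>m n * 0\<^sub>m n n = 0\<^sub>m n n" by (rule right_mult_zero_mat) (use Cc in simp)
      then show ?thesis unfolding xn by simp
    qed
    finally have "y - 1\<^sub>m n \<in> nil_mats n" using yc by (intro nil_matsI) auto
    then show ?thesis unfolding uni_mats_def using yc by auto
  qed
  have e2: "\<alpha> \<cdot>\<^sub>m 1\<^sub>m n - ?d \<cdot>\<^sub>m y = ?c \<cdot>\<^sub>m ?C"
  proof -
    have "\<alpha> \<cdot>\<^sub>m 1\<^sub>m n - ?d \<cdot>\<^sub>m y = \<alpha> \<cdot>\<^sub>m (?C * ?E) - ?d \<cdot>\<^sub>m (?C * (\<alpha> \<cdot>\<^sub>m x + 1\<^sub>m n))"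
      unfolding ye CE ..
    also have "\<dots> = ?c \<cdot>\<^sub>m ?C"
      using Cc xc by (simp add: dl2 sm2) (intro eq_matI, auto simp: algebra_simps)
    finally show ?thesis .
  qed
  have e3: "mat_inv (?c \<cdot>\<^sub>m ?C) = (1 / ?c) \<cdot>\<^sub>m ?E"
  proof (rule mat_inv_eq)
    show "?c \<cdot>\<^sub>m ?C * ((1 / ?c) \<cdot>\<^sub>m ?E) = 1\<^sub>m n"
      unfolding smult_inv_pair(1)[OF cd Cc Ec] by (rule CE)
    show "(1 / ?c) \<cdot>\<^sub>m ?E * (?c \<cdot>\<^sub>m ?C) = 1\<^sub>m n"
      unfolding smult_inv_pair(2)[OF cd Cc Ec] by (rule EC)
  qed (use Cc Ec in auto)
  have "s_map n q \<alpha> y = (?c \<cdot>\<^sub>m (?C * x)) * ((1 / ?c) \<cdot>\<^sub>m ?E)"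
    unfolding s_map_def ym1 e2 e3 ..
  also have "\<dots> = (?C * x) * ?E" by (rule smult_inv_pair(1)[OF cd _ Ec]) (use Cc xc in simp)
  also have "\<dots> = (x * ?C) * ?E" unfolding xC ..
  also have "\<dots> = x * (?C * ?E)" using xc Cc Ec by (simp add: asc2)
  also have "\<dots> = x" unfolding CE using xc by simp
  finally show ?thesis using yuni unfolding y_def by simp
qed

lemma frob_entry:
  assumes "i < n" "j < n"
  shows "frob_g n q A $$ (i, j) = (A $$ (n - 1 - j, n - 1 - i)) ^ q"
  using assms unfolding frob_g_def by simp

lemma frob_carrier: "frob_g n q A \<in> carrier_mat n n"
  unfolding frob_g_def by simp

lemma frob_dim[simp]: "dim_row (frob_g n q A) = n" "dim_col (frob_g n q A) = n"
  unfolding frob_g_def by simp_all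

lemma frob_G_eq: "frob_G n q g = mat_inv (frob_g n q g)"
  unfolding frob_G_def frob_g_def ..

context
  fixes q :: nat and e :: nat
  assumes pc: "prime CHAR('a::field)" and qe: "q = CHAR('a) ^ e"
begin

lemma fr_add: "((x::'a) + y) ^ q = x ^ q + y ^ q"
  by (rule freshmans_dream'[OF pc qe])

lemma fr_sum: "(sum (f :: 'b \<Rightarrow> 'a) S) ^ q = sum (\<lambda>i. f i ^ q) S"
  by (rule freshmans_dream_sum'[OF pc qe])

lemma fr_minus: "((x::'a) - y) ^ q = x ^ q - y ^ q"
proof -
  have "x ^ q = ((x - y) + y) ^ q" by simp
  also have "\<dots> = (x - y) ^ q + y ^ q" by (rule fr_add)
  finally show ?thesis by simp
qed

lemma q_pos: "q > 0"
proof -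
  have "CHAR('a) > 0" using pc prime_gt_0_nat by blast
  then show ?thesis unfolding qe by simp
qed

lemma frob_minus:
  fixes A B :: "'a mat"
  assumes A: "A \<in> carrier_mat n n" and B: "B \<in> carrier_mat n n"
  shows "frob_g n q (A - B) = frob_g n q A - frob_g n q B"
  by (rule eq_matI) (use A B in \<open>auto simp: frob_entry frob_carrier fr_minus\<close>)

lemma frob_smult:
  fixes A :: "'a mat"
  assumes A: "A \<in> carrier_mat n n"
  shows "frob_g n q (c \<cdot>\<^sub>m A) = (c ^ q) \<cdot>\<^sub>m frob_g n q A"
  by (rule eq_matI) (use A in \<open>auto simp: frob_entry frob_carrier power_mult_distrib\<close>)

lemma frob_one: "frob_g n q (1\<^sub>m n :: 'a mat) = 1\<^sub>m n"
proof (rule eq_matI)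
  fix i j assume i: "i < dim_row (1\<^sub>m n :: 'a mat)" and j: "j < dim_col (1\<^sub>m n :: 'a mat)"
  have "(n - 1 - j = n - 1 - i) = (i = j)" using i j by auto
  then show "frob_g n q (1\<^sub>m n) $$ (i, j) = (1\<^sub>m n :: 'a mat) $$ (i, j)"
    using i j q_pos by (simp add: frob_entry)
qed (auto simp: frob_carrier)

lemma frob_mult:
  fixes A B :: "'a mat"
  assumes A: "A \<in> carrier_mat n n" and B: "B \<in> carrier_mat n n"
  shows "frob_g n q (A * B) = frob_g n q B * frob_g n q A"
proof (rule eq_matI)
  fix i j assume i: "i < dim_row (frob_g n q B * frob_g n q A)" and j: "j < dim_col (frob_g n q B * frob_g n q A)"
  have i: "i < n" and j: "j < n" using i j by auto
  have "frob_g n q (A * B) $$ (i, j) = (\<Sum>k<n. A $$ (n - 1 - j, k) * B $$ (k, n - 1 - i)) ^ q"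
    using A B i j by (simp add: frob_entry scalar_prod_def lessThan_atLeast0)
  also have "\<dots> = (\<Sum>k<n. (A $$ (n - 1 - j, k)) ^ q * (B $$ (k, n - 1 - i)) ^ q)"
    by (simp add: fr_sum power_mult_distrib)
  also have "\<dots> = (\<Sum>l<n. (A $$ (n - 1 - j, n - 1 - l)) ^ q * (B $$ (n - 1 - l, n - 1 - i)) ^ q)"
    by (rule sum.reindex_bij_witness[where i="\<lambda>k. n - 1 - k" and j="\<lambda>k. n - 1 - k"]) auto
  also have "\<dots> = (\<Sum>l<n. frob_g n q B $$ (i, l) * frob_g n q A $$ (l, j))"
    by (rule sum.cong[OF refl]) (use i j in \<open>auto simp: frob_entry\<close>)
  also have "\<dots> = (frob_g n q B * frob_g n q A) $$ (i, j)"
    using i j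
    by (simp add: scalar_prod_def lessThan_atLeast0)
  finally show "frob_g n q (A * B) $$ (i, j) = (frob_g n q B * frob_g n q A) $$ (i, j)" .
qed (auto simp: frob_carrier)

end

lemma neg_pair:
  fixes U V :: "'a::comm_ring_1 mat"
  assumes U: "U \<in> carrier_mat n n" and V: "V \<in> carrier_mat n n"
  shows "((-1) \<cdot>\<^sub>m U) * ((-1) \<cdot>\<^sub>m V) = U * V"
  using U V by (simp add: sm2 smult_smult_mat)

lemma frob_part:
  fixes \<alpha> :: "'a::field"
  assumes pc: "prime CHAR('a)" and qe: "q = CHAR('a) ^ e"
    and g: "g \<in> uni_mats n" and cd: "\<alpha> - \<alpha> ^ q \<noteq> 0" and aq: "\<alpha> ^ (q^2) = \<alpha>"
  shows "s_map n q \<alpha> (frob_G n q g) = frob_g n q (s_map n q \<alpha> g)"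
proof -
  note F = uni_facts[OF g cd]
  let ?d = "\<alpha> ^ q"
  let ?N = "g - 1\<^sub>m n" and ?A = "\<alpha> \<cdot>\<^sub>m 1\<^sub>m n - \<alpha> ^ q \<cdot>\<^sub>m g"
  let ?B = "mat_inv ?A"
  let ?s = "frob_g n q"
  have gc: "g \<in> carrier_mat n n" and Nc: "?N \<in> carrier_mat n n" and Ac: "?A \<in> carrier_mat n n"
    and Bc: "?B \<in> carrier_mat n n" using F by auto
  note fm = frob_mult[OF pc qe] and fmi = frob_minus[OF pc qe] and fsm = frob_smult[OF pc qe]
    and f1 = frob_one[OF pc qe]
  have o1: "1 \<cdot>\<^sub>m 1\<^sub>m n + ?N = g" using gc by (intro eq_matI) auto
  have Nn: "?N ^\<^sub>m n = 0\<^sub>m n n" by (rule F(9))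
  note GI = nil_inv[OF Nc Nn one_neq_zero]
  let ?Gi = "(1 / 1) \<cdot>\<^sub>m geo n ((- 1 / 1) \<cdot>\<^sub>m ?N) n"
  have Gic: "?Gi \<in> carrier_mat n n" by (rule GI(1))
  have gGi: "g * ?Gi = 1\<^sub>m n" using GI(2) unfolding o1 .
  have Gig: "?Gi * g = 1\<^sub>m n" using GI(3) unfolding o1 .
  let ?h = "?s g" and ?K = "?s ?B" and ?Hh = "?s ?Gi"
  have hc: "?h \<in> carrier_mat n n" and Kc: "?K \<in> carrier_mat n n" and Hhc: "?Hh \<in> carrier_mat n n"
    by (rule frob_carrier)+
  have hHh: "?h * ?Hh = 1\<^sub>m n" using fm[OF Gic gc] unfolding Gig f1 by simp
  have Hhh: "?Hh * ?h = 1\<^sub>m n" using fm[OF gc Gic] unfolding gGi f1 by simp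
  have FG: "frob_G n q g = ?Hh" unfolding frob_G_eq by (rule mat_inv_eq[OF hc Hhc hHh Hhh])
  have sA: "?s ?A = ?d \<cdot>\<^sub>m 1\<^sub>m n - \<alpha> \<cdot>\<^sub>m ?h"
  proof -
    have "?d ^ q = \<alpha>" using aq by (simp add: power_mult[symmetric] power2_eq_square)
    then show ?thesis using gc by (simp add: fmi fsm f1)
  qed
  have sAc: "?s ?A \<in> carrier_mat n n" by (rule frob_carrier)
  have sAK: "?s ?A * ?K = 1\<^sub>m n" using fm[OF Bc Ac] unfolding F(6) f1 by simp
  have KsA: "?K * ?s ?A = 1\<^sub>m n" using fm[OF Ac Bc] unfolding F(5) f1 by simp
  have hK: "?h * ?K = ?K * ?h" using fm[OF Bc gc] fm[OF gc Bc] F(7) by simp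
  have sN: "?s ?N = ?h - 1\<^sub>m n" using gc by (simp add: fmi f1)
  define Y where "Y = (-1) \<cdot>\<^sub>m (?h * ?K)"
  have Yc: "Y \<in> carrier_mat n n" unfolding Y_def using hc Kc by simp
  have Xe: "\<alpha> \<cdot>\<^sub>m 1\<^sub>m n - ?d \<cdot>\<^sub>m ?Hh = (-1) \<cdot>\<^sub>m (?s ?A * ?Hh)"
  proof -
    have "?s ?A * ?Hh = ?d \<cdot>\<^sub>m ?Hh - \<alpha> \<cdot>\<^sub>m (?h * ?Hh)" unfolding sA using hc Hhc by (simp add: dr2 sm2)
    then show ?thesis unfolding hHh using Hhc by (intro eq_matI) auto
  qed
  have Xc: "\<alpha> \<cdot>\<^sub>m 1\<^sub>m n - ?d \<cdot>\<^sub>m ?Hh \<in> carrier_mat n n" using Hhc by simp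
  have Xinv: "mat_inv (\<alpha> \<cdot>\<^sub>m 1\<^sub>m n - ?d \<cdot>\<^sub>m ?Hh) = Y"
  proof (rule mat_inv_eq[OF Xc Yc])
    have "(?s ?A * ?Hh) * (?h * ?K) = ?s ?A * (?Hh * (?h * ?K))" using sAc Hhc hc Kc by (simp add: asc2)
    also have "?Hh * (?h * ?K) = ?K" by (rule cancel_l[OF Hhc hc Kc Hhh])
    finally show "(\<alpha> \<cdot>\<^sub>m 1\<^sub>m n - ?d \<cdot>\<^sub>m ?Hh) * Y = 1\<^sub>m n"
      unfolding Xe Y_def neg_pair[OF cm1[OF sAc Hhc] cm1[OF hc Kc]] sAK by simp
    have "(?h * ?K) * (?s ?A * ?Hh) = ?h * ((?K * ?s ?A) * ?Hh)" using sAc Hhc hc Kc by (simp add: asc2)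
    also have "\<dots> = 1\<^sub>m n" unfolding KsA using Hhc hHh by simp
    finally show "Y * (\<alpha> \<cdot>\<^sub>m 1\<^sub>m n - ?d \<cdot>\<^sub>m ?Hh) = 1\<^sub>m n"
      unfolding Xe Y_def neg_pair[OF cm1[OF hc Kc] cm1[OF sAc Hhc]] .
  qed
  have "s_map n q \<alpha> (frob_G n q g) = (?Hh - 1\<^sub>m n) * Y" unfolding s_map_def FG Xinv ..
  also have "\<dots> = ?h * ?K - ?K"
  proof -
    have "(?Hh - 1\<^sub>m n) * (?h * ?K) = ?Hh * (?h * ?K) - ?h * ?K" using Hhc hc Kc by (simp add: dr2)
    also have "?Hh * (?h * ?K) = ?K" by (rule cancel_l[OF Hhc hc Kc Hhh])
    finally have "(?Hh - 1\<^sub>m n) * (?h * ?K) = ?K - ?h * ?K" .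
    then have "(?Hh - 1\<^sub>m n) * Y = (-1) \<cdot>\<^sub>m (?K - ?h * ?K)" unfolding Y_def using Hhc hc Kc by (simp add: sm2)
    then show ?thesis using hc Kc by (simp) (intro eq_matI, auto)
  qed
  also have "\<dots> = ?K * ?h - ?K" unfolding hK ..
  also have "\<dots> = ?K * ?s ?N" unfolding sN using Kc hc by (simp add: dl2)
  also have "\<dots> = ?s (?N * ?B)" by (rule fm[OF Nc Bc, symmetric])
  also have "\<dots> = frob_g n q (s_map n q \<alpha> g)" unfolding s_map_def ..
  finally show ?thesis .
qed

lemma uni_sub: "uni_mats n \<subseteq> carrier_mat n n"
  unfolding uni_mats_def by auto

lemma s_morph:
  fixes \<alpha> :: "'a::field"
  assumes cd: "\<alpha> - \<alpha> ^ q \<noteq> 0"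
  shows "is_morphism n (uni_mats n) (s_map n q \<alpha>)"
proof -
  let ?c = "\<alpha> - \<alpha> ^ q" and ?d = "\<alpha> ^ q"
  have M1: "is_morphism n (uni_mats n) (\<lambda>A::'a mat. A - 1\<^sub>m n)"
    by (rule morph_minus[OF morph_id[OF uni_sub] morph_const]) simp
  note M2 = morph_smult[OF M1, of "- ?d"]
  note M3 = morph_smult[OF M2, of "- 1 / ?c"]
  note M4 = morph_geo[OF M3, of n]
  note M5 = morph_smult[OF M4, of "1 / ?c"]
  note M6 = morph_mult[OF M1 M5]
  show ?thesis
  proof (rule morph_cong[OF M6])
    fix A :: "'a mat" assume A: "A \<in> uni_mats n"
    show "s_map n q \<alpha> A = (A - 1\<^sub>m n) * ((1 / ?c) \<cdot>\<^sub>m geo n ((- 1 / ?c) \<cdot>\<^sub>m ((- ?d) \<cdot>\<^sub>m (A - 1\<^sub>m n))) n)"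
      unfolding s_map_def uni_facts(10)[OF A cd] ..
  qed
qed
end

theorem mainTheorem2:
  fixes p q e n :: nat and \<alpha> :: "'k::alg_closed_field"
  assumes "prime p" and "CHAR('k) = p" and "e \<ge> 1" and "q = p ^ e"
    and "\<alpha> ^ (q^2) = \<alpha>" and "\<alpha> ^ q \<noteq> \<alpha>"
  shows "bij_betw (s_map n q \<alpha>) (uni_mats n) (nil_mats n :: 'k mat set)
    \<and> is_morphism n (uni_mats n) (s_map n q \<alpha>)
    \<and> (\<forall>h\<in>GL n. \<forall>g\<in>uni_mats n.
          s_map n q \<alpha> (h * g * mat_inv h) = h * s_map n q \<alpha> g * mat_inv h)
    \<and> (\<forall>g\<in>uni_mats n. s_inv_map n q \<alpha> (s_map n q \<alpha> g) = g)
    \<and> (\<forall>x\<in>nil_mats n. s_inv_map n q \<alpha> x \<in> uni_mats n \<and> s_map n q \<alpha> (s_inv_map n q \<alpha> x) = x)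
    \<and> (\<forall>g\<in>uni_mats n. s_map n q \<alpha> (frob_G n q g) = frob_g n q (s_map n q \<alpha> g))"
proof -
  have cd: "\<alpha> - \<alpha> ^ q \<noteq> 0" using assms(6) by simp
  have pc: "prime CHAR('k)" using assms(1,2) by simp
  have qe: "q = CHAR('k) ^ e" using assms(2,4) by simp
  have L: "\<forall>g\<in>uni_mats n. s_inv_map n q \<alpha> (s_map n q \<alpha> g) = g"
    using s_left_inv[OF _ cd] by blast
  have R: "\<forall>x\<in>nil_mats n. s_inv_map n q \<alpha> x \<in> uni_mats n \<and> s_map n q \<alpha> (s_inv_map n q \<alpha> x) = x"
    using nil_side[OF _ cd] by blast
  have B: "bij_betw (s_map n q \<alpha>) (uni_mats n) (nil_mats n :: 'k mat set)"
  proof (rule bij_betw_byWitness[where f'="s_inv_map n q \<alpha>"])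
    show "\<forall>a\<in>uni_mats n. s_inv_map n q \<alpha> (s_map n q \<alpha> a) = a" by (rule L)
    show "\<forall>a'\<in>nil_mats n. s_map n q \<alpha> (s_inv_map n q \<alpha> a') = a'" using R by blast
    show "s_map n q \<alpha> ` uni_mats n \<subseteq> nil_mats n" using s_nil[OF _ cd] by blast
    show "s_inv_map n q \<alpha> ` nil_mats n \<subseteq> uni_mats n" using R by blast
  qed
  have E: "\<forall>h\<in>GL n. \<forall>g\<in>uni_mats n.
          s_map n q \<alpha> (h * g * mat_inv h) = h * s_map n q \<alpha> g * mat_inv h"
    using s_equiv[OF _ _ cd] by blast
  have Fr: "\<forall>g\<in>uni_mats n. s_map n q \<alpha> (frob_G n q g) = frob_g n q (s_map n q \<alpha> g)"
    using frob_part[OF pc qe _ cd assms(5)] by blast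
  show ?thesis using B s_morph[OF cd] E L R Fr by blast
qed

end
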